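(* Let $A$ be a finite simple undirected graph, let $v\neq w$ be vertices of $A$, and let $d(v),d(w)$ denote the degrees of $v$ and $w$ in $A$. (i) If $\{v,w\}\notin E(A)$ and $A'$ is obtained from $A$ by inserting the edge $\{v,w\}$, then $|E(W(A'))\setminus E(W(A))|\le d(v)+d(w)$ and $|E(W(A))\setminus E(W(A'))|\le \min(d(v),d(w))$. (ii) If $\{v,w\}\in E(A)$ and $A'$ is obtained from $A$ by removing the edge $\{v,w\}$, then $|E(W(A'))\setminus E(W(A))|\le \min(d(v),d(w))$ and $|E(W(A))\setminus E(W(A'))|\le d(v)+d(w)$.
   Context: A wedge in a graph $G=(V,E)$ is a triple of nodes $u,v,w$ with $\{u,v\},\{v,w\}\in E$ and $\{u,w\}\notin E$, denoted $(v,\{u,w\})$. The wedge graph $W(G)$ has one vertex $n_{uv}$ for each edge $\{u,v\}\in E$, and an edge $\{n_{uv},n_{vw}\}$ for each wedge $(v,\{u,w\})$ of $G$. Edges of wedge graphs are compared via these names, i.e. $n_{uv}$ denotes the same vertex in $W(A)$ and $W(A')$ whenever $\{u,v\}$ is an edge of both graphs. *)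

theory Defs
  imports Main
begin

definition simple_graph :: "'a set \<Rightarrow> 'a set set \<Rightarrow> bool" where
  "simple_graph V E \<longleftrightarrow> finite V \<and> (\<forall>e\<in>E. e \<subseteq> V \<and> card e = 2)"

definition degree :: "'a set \<Rightarrow> 'a set set \<Rightarrow> 'a \<Rightarrow> nat" where
  "degree V E v = card {u \<in> V. {u, v} \<in> E}"

text \<open>Edge set of the wedge graph W(G): vertices of W(G) are the edges of G
  (n_uv is represented by the set {u,v}); each wedge (v,{u,w}) gives the edge {n_uv, n_vw}.\<close>
definition wedge_edges :: "'a set set \<Rightarrow> 'a set set set" where
  "wedge_edges E = {{{u, v}, {v, w}} | u v w.
      {u, v} \<in> E \<and> {v, w} \<in> E \<and> u \<noteq> w \<and> {u, w} \<notin> E}"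

end

theory Submission
  imports Defs
begin

lemma edge_in_V:
  assumes "simple_graph V E" "{a, c} \<in> E"
  shows "a \<in> V" "c \<in> V" "a \<noteq> c"
proof -
  have "{a,c} \<subseteq> V" "card {a,c} = 2" using assms unfolding simple_graph_def by auto
  then show "a \<in> V" "c \<in> V" by auto
  show "a \<noteq> c"
  proof
    assume "a = c"
    then have "card {a,c} = 1" by simp
    then show False using \<open>card {a,c} = 2\<close> by simp
  qed
qed

lemma card_bound_sum:
  assumes "simple_graph V E" "X \<subseteq> (\<lambda>b. {{v,w},{v,b}}) ` {u\<in>V. {u,v}\<in>E} \<union> (\<lambda>b. {{v,w},{w,b}}) ` {u\<in>V. {u,w}\<in>E}"
  shows "card X \<le> degree V E v + degree V E w"
proof -
  have fV: "finite V" using assms(1) unfolding simple_graph_def by auto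
  let ?A = "{u\<in>V. {u,v}\<in>E}" and ?B = "{u\<in>V. {u,w}\<in>E}"
  have "card X \<le> card ((\<lambda>b. {{v,w},{v,b}}) ` ?A \<union> (\<lambda>b. {{v,w},{w,b}}) ` ?B)"
    using assms(2) fV by (intro card_mono) auto
  also have "\<dots> \<le> card ((\<lambda>b. {{v,w},{v,b}}) ` ?A) + card ((\<lambda>b. {{v,w},{w,b}}) ` ?B)"
    by (rule card_Un_le)
  also have "\<dots> \<le> card ?A + card ?B"
    by (intro add_mono card_image_le) (use fV in auto)
  finally show ?thesis unfolding degree_def .
qed

lemma card_bound_min:
  assumes "simple_graph V E" "X \<subseteq> (\<lambda>c. {{v,c},{c,w}}) ` {c\<in>V. {c,v}\<in>E \<and> {c,w}\<in>E}"
  shows "card X \<le> min (degree V E v) (degree V E w)"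
proof -
  have fV: "finite V" using assms(1) unfolding simple_graph_def by auto
  let ?C = "{c\<in>V. {c,v}\<in>E \<and> {c,w}\<in>E}"
  have "card X \<le> card ((\<lambda>c. {{v,c},{c,w}}) ` ?C)"
    using assms(2) fV by (intro card_mono) auto
  also have "\<dots> \<le> card ?C" by (rule card_image_le) (use fV in auto)
  finally have c: "card X \<le> card ?C" .
  have "card ?C \<le> degree V E v" unfolding degree_def by (rule card_mono) (use fV in auto)
  moreover have "card ?C \<le> degree V E w" unfolding degree_def by (rule card_mono) (use fV in auto)
  ultimately show ?thesis using c by simp
qed

lemma sum_mem:
  assumes G: "simple_graph V E" and "c \<in> {v,w}" "{c,b} \<in> E" "X = {{v,w},{c,b}}"
  shows "X \<in> (\<lambda>b. {{v,w},{v,b}}) ` {u\<in>V. {u,v}\<in>E} \<union> (\<lambda>b. {{v,w},{w,b}}) ` {u\<in>V. {u,w}\<in>E}"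
proof -
  have bV: "b \<in> V" using edge_in_V[OF G assms(3)] by simp
  have cb: "{b,c} \<in> E" using assms(3) by (simp add: insert_commute)
  show ?thesis
  proof (cases "c = v")
    case True
    then show ?thesis using assms(4) bV cb by blast
  next
    case False
    then have "c = w" using assms(2) by blast
    then show ?thesis using assms(4) bV cb by blast
  qed
qed

lemma key_sum:
  assumes "{a,c} \<in> insert {v,w} E" "{c,b} \<in> insert {v,w} E" "a \<noteq> b" "\<not> ({a,c} \<in> E \<and> {c,b} \<in> E)"
  shows "\<exists>c' b'. c' \<in> {v,w} \<and> {c',b'} \<in> E \<and> {{a,c},{c,b}} = {{v,w},{c',b'}}"
proof -
  have ne: "{a,c} \<noteq> {c,b}" using assms(3) by (auto simp: doubleton_eq_iff)
  show ?thesis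
  proof (cases "{a,c} \<in> E")
    case False
    then have e1: "{a,c} = {v,w}" using assms(1) by blast
    then have "{c,b} \<in> E" using assms(2) ne by blast
    moreover have "c \<in> {v,w}" using e1 by blast
    ultimately show ?thesis using e1 by blast
  next
    case True
    then have e2: "{c,b} = {v,w}" using assms(2,4) by blast
    have "{c,a} \<in> E" using True by (simp add: insert_commute)
    moreover have "c \<in> {v,w}" using e2 by blast
    moreover have "{{a,c},{c,b}} = {{v,w},{c,a}}"
    proof -
      have "{{a,c},{c,b}} = {{c,b},{a,c}}" by (rule insert_commute)
      also have "\<dots> = {{v,w},{c,a}}" using e2 by (simp only: insert_commute[of a c])
      finally show ?thesis .
    qed
    ultimately show ?thesis by blast
  qed
qed

lemma min_mem:
  assumes G: "simple_graph V E" and "{a,b} = {v,w}" "{a,c} \<in> E" "{c,b} \<in> E" "X = {{a,c},{c,b}}"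
  shows "X \<in> (\<lambda>c. {{v,c},{c,w}}) ` {c\<in>V. {c,v}\<in>E \<and> {c,w}\<in>E}"
proof -
  have cV: "c \<in> V" using edge_in_V[OF G assms(3)] by simp
  have ca: "{c,a} \<in> E" using assms(3) by (simp add: insert_commute)
  have bc: "{b,c} \<in> E" using assms(4) by (simp add: insert_commute)
  from assms(2) have "(a = v \<and> b = w) \<or> (a = w \<and> b = v)" by (auto simp: doubleton_eq_iff)
  then show ?thesis
  proof
    assume h: "a = v \<and> b = w"
    then have "X = {{v,c},{c,w}}" using assms(5) by simp
    moreover have "{c,v} \<in> E \<and> {c,w} \<in> E" using h ca assms(4) by simp
    ultimately show ?thesis using cV by blast
  next
    assume h: "a = w \<and> b = v"
    then have "X = {{w,c},{c,v}}" using assms(5) by simp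
    also have "\<dots> = {{c,v},{w,c}}" by (rule insert_commute)
    also have "\<dots> = {{v,c},{c,w}}" by (simp only: insert_commute[of c v] insert_commute[of w c])
    finally have "X = {{v,c},{c,w}}" .
    moreover have "{c,v} \<in> E \<and> {c,w} \<in> E" using h ca assms(4) by simp
    ultimately show ?thesis using cV by blast
  qed
qed

lemma wedgeI:
  "{u,v} \<in> E \<Longrightarrow> {v,w} \<in> E \<Longrightarrow> u \<noteq> w \<Longrightarrow> {u,w} \<notin> E \<Longrightarrow> {{u,v},{v,w}} \<in> wedge_edges E"
  unfolding wedge_edges_def by blast

lemma wedgeE:
  assumes "X \<in> wedge_edges E"
  obtains u v w where "X = {{u,v},{v,w}}" "{u,v} \<in> E" "{v,w} \<in> E" "u \<noteq> w" "{u,w} \<notin> E"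
  using assms unfolding wedge_edges_def by blast

theorem lemma2:
  fixes V :: "'a set" and E :: "'a set set" and v w :: 'a
  assumes "simple_graph V E" and "v \<in> V" and "w \<in> V" and "v \<noteq> w"
  shows "({v, w} \<notin> E \<longrightarrow>
            card (wedge_edges (insert {v, w} E) - wedge_edges E) \<le> degree V E v + degree V E w
          \<and> card (wedge_edges E - wedge_edges (insert {v, w} E)) \<le> min (degree V E v) (degree V E w))
       \<and> ({v, w} \<in> E \<longrightarrow>
            card (wedge_edges (E - {{v, w}}) - wedge_edges E) \<le> min (degree V E v) (degree V E w)
          \<and> card (wedge_edges E - wedge_edges (E - {{v, w}})) \<le> degree V E v + degree V E w)"
proof (intro conjI impI)
  note G = assms(1)
  assume nE: "{v, w} \<notin> E"
  show "card (wedge_edges (insert {v, w} E) - wedge_edges E) \<le> degree V E v + degree V E w"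
  proof (rule card_bound_sum[OF G], rule subsetI)
    fix X assume X: "X \<in> wedge_edges (insert {v, w} E) - wedge_edges E"
    then have X1: "X \<in> wedge_edges (insert {v, w} E)" and X2: "X \<notin> wedge_edges E" by auto
    from X1 obtain a c b where Xd: "X = {{a,c},{c,b}}" and h: "{a,c} \<in> insert {v,w} E"
      "{c,b} \<in> insert {v,w} E" "a \<noteq> b" "{a,b} \<notin> insert {v,w} E"
      by (rule wedgeE)
    have "{a,b} \<notin> E" using h(4) by simp
    then have "\<not> ({a,c} \<in> E \<and> {c,b} \<in> E)"
      using X2 Xd h(3) wedgeI[of a c E b] by blast
    then obtain c' b' where "c' \<in> {v,w}" "{c',b'} \<in> E" "X = {{v,w},{c',b'}}"
      using key_sum[OF h(1,2,3)] Xd by blast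
    then show "X \<in> (\<lambda>b. {{v,w},{v,b}}) ` {u\<in>V. {u,v}\<in>E} \<union> (\<lambda>b. {{v,w},{w,b}}) ` {u\<in>V. {u,w}\<in>E}"
      by (rule sum_mem[OF G])
  qed
  show "card (wedge_edges E - wedge_edges (insert {v, w} E)) \<le> min (degree V E v) (degree V E w)"
  proof (rule card_bound_min[OF G], rule subsetI)
    fix X assume X: "X \<in> wedge_edges E - wedge_edges (insert {v, w} E)"
    then have X1: "X \<in> wedge_edges E" and X2: "X \<notin> wedge_edges (insert {v, w} E)" by auto
    from X1 obtain a c b where Xd: "X = {{a,c},{c,b}}" and h: "{a,c} \<in> E"
      "{c,b} \<in> E" "a \<noteq> b" "{a,b} \<notin> E"
      by (rule wedgeE)
    have "{a,b} \<in> insert {v,w} E"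
      using X2 Xd h wedgeI[of a c "insert {v,w} E" b] by blast
    then have "{a,b} = {v,w}" using h(4) by blast
    then show "X \<in> (\<lambda>c. {{v,c},{c,w}}) ` {c\<in>V. {c,v}\<in>E \<and> {c,w}\<in>E}"
      using min_mem[OF G _ h(1,2) Xd] by blast
  qed
next
  note G = assms(1)
  assume iE: "{v, w} \<in> E"
  show "card (wedge_edges (E - {{v, w}}) - wedge_edges E) \<le> min (degree V E v) (degree V E w)"
  proof (rule card_bound_min[OF G], rule subsetI)
    fix X assume X: "X \<in> wedge_edges (E - {{v, w}}) - wedge_edges E"
    then have X1: "X \<in> wedge_edges (E - {{v, w}})" and X2: "X \<notin> wedge_edges E" by auto
    from X1 obtain a c b where Xd: "X = {{a,c},{c,b}}" and h: "{a,c} \<in> E - {{v, w}}"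
      "{c,b} \<in> E - {{v, w}}" "a \<noteq> b" "{a,b} \<notin> E - {{v, w}}"
      by (rule wedgeE)
    have h1: "{a,c} \<in> E" "{c,b} \<in> E" using h(1,2) by auto
    have "{a,b} \<in> E"
      using X2 Xd h(3) h1 wedgeI[of a c E b] by blast
    then have "{a,b} = {v,w}" using h(4) by blast
    then show "X \<in> (\<lambda>c. {{v,c},{c,w}}) ` {c\<in>V. {c,v}\<in>E \<and> {c,w}\<in>E}"
      using min_mem[OF G _ h1 Xd] by blast
  qed
  show "card (wedge_edges E - wedge_edges (E - {{v, w}})) \<le> degree V E v + degree V E w"
  proof (rule card_bound_sum[OF G], rule subsetI)
    fix X assume X: "X \<in> wedge_edges E - wedge_edges (E - {{v, w}})"
    then have X1: "X \<in> wedge_edges E" and X2: "X \<notin> wedge_edges (E - {{v, w}})" by auto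
    from X1 obtain a c b where Xd: "X = {{a,c},{c,b}}" and h: "{a,c} \<in> E"
      "{c,b} \<in> E" "a \<noteq> b" "{a,b} \<notin> E"
      by (rule wedgeE)
    have ins: "insert {v,w} (E - {{v,w}}) = E" using iE by blast
    have h5: "{a,b} \<notin> E - {{v,w}}" using h(4) by blast
    have "\<not> ({a,c} \<in> E - {{v,w}} \<and> {c,b} \<in> E - {{v,w}})"
      using X2 Xd h(3) h5 wedgeI[of a c "E - {{v,w}}" b] by blast
    moreover have i1: "{a,c} \<in> insert {v,w} (E - {{v,w}})" and i2: "{c,b} \<in> insert {v,w} (E - {{v,w}})"
      using h(1,2) ins by auto
    ultimately have "\<exists>c' b'. c' \<in> {v,w} \<and> {c',b'} \<in> E - {{v,w}} \<and> {{a,c},{c,b}} = {{v,w},{c',b'}}"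
      using key_sum[OF i1 i2 h(3)] by simp
    then obtain c' b' where c': "c' \<in> {v,w}" "{c',b'} \<in> E - {{v,w}}" "X = {{v,w},{c',b'}}"
      using Xd by auto
    have "{c',b'} \<in> E" using c'(2) by blast
    then show "X \<in> (\<lambda>b. {{v,w},{v,b}}) ` {u\<in>V. {u,v}\<in>E} \<union> (\<lambda>b. {{v,w},{w,b}}) ` {u\<in>V. {u,w}\<in>E}"
      using sum_mem[OF G c'(1) _ c'(3)] by blast
  qed
qed

end
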